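(* Let $k\ge 2$ be an integer and let $b$ be a nonzero real number. Then $$\Im\left(\sum_{j=0}^{\infty}\frac{1}{(i j+b)^k}\right)=-\frac{(2\pi)^k}{2}\int_{0}^{1}\sum_{j=1}^{k}\frac{c_j(b)\left(u^{k-j}e^{-2\pi b u}-e^{-2\pi b}\right)}{(j-1)!\,(k-j)!}\cot(\pi u)\,du,$$ where $c_j(b)=\delta_{1j}+\mathrm{Li}_{1-j}(e^{-2\pi b})$.
   Context: $i$ denotes the imaginary unit. $\delta_{1j}$ is the Kronecker delta. $\mathrm{Li}_s(z)$ is the polylogarithm, the analytic continuation of $\sum_{m\ge1} z^m/m^s$; for $s=1-j\le 0$ it is a rational function of $z$, defined for $z\ne1$. *)

theory Defs
  imports "HOL-Analysis.Analysis"
begin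

text \<open>Polylogarithm of non-positive integer order, Li_{-n}(z), as the rational
function obtained from Li_0(z) = z/(1-z) via Li_{s-1}(z) = z * d/dz Li_s(z);
this is the analytic continuation, defined for z \<noteq> 1.\<close>
primrec polylog_nonpos :: "nat \<Rightarrow> complex \<Rightarrow> complex" where
  "polylog_nonpos 0 = (\<lambda>z. z / (1 - z))"
| "polylog_nonpos (Suc n) = (\<lambda>z. z * deriv (polylog_nonpos n) z)"

definition c_coef :: "nat \<Rightarrow> real \<Rightarrow> complex" where
  "c_coef j b = (if j = 1 then 1 else 0) + polylog_nonpos (j - 1) (complex_of_real (exp (- 2 * pi * b)))"

end

theory Submission
  imports Defs "HOL-Complex_Analysis.Complex_Analysis"
begin


lemma L_holo: "polylog_nonpos n holomorphic_on (- {1})"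
proof (induction n)
  case 0
  show ?case by (simp, intro holomorphic_intros) auto
next
  case (Suc n)
  have o: "open (- {1::complex})" by auto
  show ?case by (simp, intro holomorphic_intros holomorphic_deriv[OF Suc o])
qed

lemma L_rec:
  fixes z :: complex
  assumes "z \<noteq> 1"
  shows "polylog_nonpos n z * (1 - z) = z * (1 + (\<Sum>i<n. of_nat (n choose i) * polylog_nonpos i z))"
  using assms
proof (induction n arbitrary: z)
  case 0
  then show ?case by (simp add: field_simps)
next
  case (Suc n z0)
  define L where "L = polylog_nonpos"
  have o: "open (- {1::complex})" by auto
  have z0: "z0 \<in> - {1}" using Suc.prems by auto
  have dL: "\<And>i. (L i has_field_derivative deriv (L i) z0) (at z0)"
    unfolding L_def using holomorphic_derivI[OF L_holo o z0] .
  have ev: "eventually (\<lambda>z. L n z * (1 - z) = z * (1 + (\<Sum>i<n. of_nat (n choose i) * L i z))) (nhds z0)"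
  proof -
    have "eventually (\<lambda>z. z \<in> - {1}) (nhds z0)" using o z0 by (rule eventually_nhds_in_open)
    then show ?thesis by eventually_elim (use Suc.IH in \<open>auto simp: L_def\<close>)
  qed
  have d: "deriv (\<lambda>z. L n z * (1 - z)) z0 = deriv (\<lambda>z. z * (1 + (\<Sum>i<n. of_nat (n choose i) * L i z))) z0"
    by (rule deriv_cong_ev[OF ev refl])
  have dA: "deriv (\<lambda>z. L n z * (1 - z)) z0 = deriv (L n) z0 * (1 - z0) - L n z0"
    by (rule DERIV_imp_deriv) (auto intro!: derivative_eq_intros dL)
  have dB: "deriv (\<lambda>z. z * (1 + (\<Sum>i<n. of_nat (n choose i) * L i z))) z0
      = (1 + (\<Sum>i<n. of_nat (n choose i) * L i z0)) + z0 * (\<Sum>i<n. of_nat (n choose i) * deriv (L i) z0)"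
    by (rule DERIV_imp_deriv) (auto intro!: derivative_eq_intros dL simp: sum_distrib_left sum_distrib_right mult_ac)
  have e0: "deriv (L n) z0 * (1 - z0) - L n z0 = (1 + (\<Sum>i<n. of_nat (n choose i) * L i z0)) + z0 * (\<Sum>i<n. of_nat (n choose i) * deriv (L i) z0)"
    using d dA dB by simp
  have sd: "z0 * (\<Sum>i<n. of_nat (n choose i) * deriv (L i) z0) = (\<Sum>i<n. of_nat (n choose i) * (z0 * deriv (L i) z0))"
    by (simp add: sum_distrib_left mult_ac)
  have e: "z0 * deriv (L n) z0 * (1 - z0) - z0 * L n z0 =
     z0 * (1 + (\<Sum>i<n. of_nat (n choose i) * L i z0)) + z0 * (\<Sum>i<n. of_nat (n choose i) * (z0 * deriv (L i) z0))"
  proof -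
    have "z0 * (deriv (L n) z0 * (1 - z0) - L n z0) = z0 * ((1 + (\<Sum>i<n. of_nat (n choose i) * L i z0)) + z0 * (\<Sum>i<n. of_nat (n choose i) * deriv (L i) z0))"
      using e0 by simp
    then show ?thesis unfolding sd[symmetric] by (simp add: algebra_simps)
  qed
  have Ls: "\<And>i. L (Suc i) z0 = z0 * deriv (L i) z0" by (simp add: L_def)
  have IH: "z0 * (1 + (\<Sum>i<n. of_nat (n choose i) * L i z0)) = L n z0 * (1 - z0)"
    using Suc.IH[OF Suc.prems] by (simp add: L_def)
  have pas: "(\<Sum>i<Suc n. of_nat (Suc n choose i) * L i z0) =
      L n z0 + (\<Sum>i<n. of_nat (n choose i) * L i z0) + (\<Sum>i<n. of_nat (n choose i) * L (Suc i) z0)"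
  proof -
    have "(\<Sum>i<Suc n. of_nat (Suc n choose i) * L i z0) = L 0 z0 + (\<Sum>i<n. of_nat (Suc n choose Suc i) * L (Suc i) z0)"
      by (subst sum.lessThan_Suc_shift) simp
    also have "\<dots> = L 0 z0 + (\<Sum>i<n. of_nat (n choose Suc i) * L (Suc i) z0) + (\<Sum>i<n. of_nat (n choose i) * L (Suc i) z0)"
      by (simp add: sum.distrib algebra_simps)
    also have "L 0 z0 + (\<Sum>i<n. of_nat (n choose Suc i) * L (Suc i) z0) = (\<Sum>i<Suc n. of_nat (n choose i) * L i z0)"
      by (subst sum.lessThan_Suc_shift) simp
    also have "\<dots> = L n z0 + (\<Sum>i<n. of_nat (n choose i) * L i z0)" by simp
    finally show ?thesis .
  qed
  have "L (Suc n) z0 * (1 - z0) = z0 * L n z0 + z0 * (1 + (\<Sum>i<n. of_nat (n choose i) * L i z0)) + z0 * (\<Sum>i<n. of_nat (n choose i) * L (Suc i) z0)"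
    using e unfolding Ls by (simp add: algebra_simps)
  also have "\<dots> = z0 * (1 + (\<Sum>i<Suc n. of_nat (Suc n choose i) * L i z0))"
    unfolding pas by (simp add: algebra_simps)
  finally show ?case by (simp add: L_def)
qed



primrec Vf :: "nat \<Rightarrow> complex \<Rightarrow> complex" where
  "Vf 0 w = (1 - exp (- w)) / w"
| "Vf (Suc m) w = of_nat (Suc m) / w * Vf m w - exp (- w) / w"

primrec Ff :: "nat \<Rightarrow> complex \<Rightarrow> complex \<Rightarrow> complex" where
  "Ff 0 w x = - exp (- w * x) / w"
| "Ff (Suc m) w x = of_nat (Suc m) / w * Ff m w x - x ^ Suc m * exp (- w * x) / w"

lemma Ff_deriv:
  assumes "w \<noteq> 0"
  shows "(Ff m w has_field_derivative x ^ m * exp (- w * x)) (at x)"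
proof (induction m arbitrary: x)
  case 0
  show ?case using assms
    by (auto intro!: derivative_eq_intros simp: field_simps)
next
  case (Suc m)
  have d1: "((\<lambda>x. x ^ Suc m) has_field_derivative (1 + of_nat m) * (1 * x ^ m)) (at x)"
    by (rule DERIV_power_Suc) (rule DERIV_ident)
  have d2: "((\<lambda>x. x ^ Suc m * exp (- w * x)) has_field_derivative
      x ^ Suc m * (exp (- w * x) * (- w)) + (1 + of_nat m) * (1 * x ^ m) * exp (- w * x)) (at x)"
    by (rule DERIV_mult'[OF d1]) (auto intro!: derivative_eq_intros)
  have d3: "((\<lambda>x. of_nat (Suc m) / w * Ff m w x - x ^ Suc m * exp (- w * x) / w) has_field_derivative
      of_nat (Suc m) / w * (x ^ m * exp (- w * x)) - (x ^ Suc m * (exp (- w * x) * (- w)) + (1 + of_nat m) * (1 * x ^ m) * exp (- w * x)) / w) (at x)"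
    by (rule DERIV_diff[OF DERIV_cmult[OF Suc.IH] DERIV_cdivide[OF d2]])
  have fe: "Ff (Suc m) w = (\<lambda>x. of_nat (Suc m) / w * Ff m w x - x ^ Suc m * exp (- w * x) / w)"
    by (rule ext) simp
  show ?case unfolding fe
    by (rule DERIV_cong[OF d3]) (use assms in \<open>simp add: field_simps\<close>)
qed

lemma Ff_Vf: "w \<noteq> 0 \<Longrightarrow> Ff m w 1 - Ff m w 0 = Vf m w"
proof (induction m)
  case (Suc m)
  then show ?case by (simp add: field_simps)
qed (simp add: field_simps)

lemma Vf_integral:
  assumes "w \<noteq> 0"
  shows "((\<lambda>u::real. (complex_of_real u) ^ m * exp (- w * complex_of_real u)) has_integral Vf m w) {0..1}"
proof -
  have "((\<lambda>u::real. (complex_of_real u) ^ m * exp (- w * complex_of_real u)) has_integral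
      (Ff m w (complex_of_real 1) - Ff m w (complex_of_real 0))) {0..1}"
    apply (rule fundamental_theorem_of_calculus[of 0 1 "\<lambda>u. Ff m w (complex_of_real u)"])
     apply simp
    apply (rule has_vector_derivative_real_field)
    apply (rule Ff_deriv[OF assms])
    done
  then show ?thesis using Ff_Vf[OF assms] by simp
qed

lemma T_identity:
  fixes c :: "nat \<Rightarrow> complex" and z w :: complex
  assumes h1: "c 1 * (1 - z) = 1"
    and hrec: "\<And>n. n \<ge> 1 \<Longrightarrow> c (Suc n) * (1 - z) = z * (\<Sum>i<n. of_nat (n choose i) * c (Suc i))"
    and hw: "w \<noteq> 0" and hz: "exp (- w) = z"
  shows "(\<Sum>i\<le>n. c (Suc i) * Vf (n - i) w / (fact i * fact (n - i))) = 1 / w ^ Suc n"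
proof (induction n)
  case 0
  then show ?case using h1 hw hz by (simp add: field_simps)
next
  case (Suc n)
  have rec: "c (Suc (Suc n)) * (1 - z) / fact (Suc n) = z * (\<Sum>i\<le>n. c (Suc i) / (fact i * fact (Suc n - i)))"
  proof -
    have "c (Suc (Suc n)) * (1 - z) / fact (Suc n) = z * (\<Sum>i<Suc n. of_nat (Suc n choose i) * c (Suc i)) / fact (Suc n)"
      using hrec[of "Suc n"] by simp
    also have "\<dots> = z * (\<Sum>i\<le>n. of_nat (Suc n choose i) * c (Suc i) / fact (Suc n))"
      by (simp only: lessThan_Suc_atMost sum_divide_distrib[symmetric] times_divide_eq_right)
    also have "(\<Sum>i\<le>n. of_nat (Suc n choose i) * c (Suc i) / fact (Suc n)) = (\<Sum>i\<le>n. c (Suc i) / (fact i * fact (Suc n - i)))"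
    proof (rule sum.cong[OF refl])
      fix i assume "i \<in> {..n}"
      then have "i \<le> Suc n" by auto
      then have "(of_nat (Suc n choose i) :: complex) = fact (Suc n) / (fact i * fact (Suc n - i))"
        by (simp add: binomial_fact)
      moreover have "(fact (Suc n)::complex) \<noteq> 0" "(fact i :: complex) \<noteq> 0" "(fact (Suc n - i)::complex) \<noteq> 0"
        by (simp_all del: fact_Suc)
      ultimately show "of_nat (Suc n choose i) * c (Suc i) / fact (Suc n) = c (Suc i) / (fact i * fact (Suc n - i))"
        by (simp add: field_simps del: fact_Suc)
    qed
    finally show ?thesis .
  qed
  have split: "(\<Sum>i\<le>Suc n. c (Suc i) * Vf (Suc n - i) w / (fact i * fact (Suc n - i)))
     = c (Suc (Suc n)) * Vf 0 w / fact (Suc n) + (\<Sum>i\<le>n. c (Suc i) * Vf (Suc (n - i)) w / (fact i * fact (Suc (n - i))))"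
    by (simp add: Suc_diff_le)
  have inner: "(\<Sum>i\<le>n. c (Suc i) * Vf (Suc (n - i)) w / (fact i * fact (Suc (n - i))))
     = (1 / w) * (\<Sum>i\<le>n. c (Suc i) * Vf (n - i) w / (fact i * fact (n - i)))
       - (z / w) * (\<Sum>i\<le>n. c (Suc i) / (fact i * fact (Suc n - i)))"
  proof -
    have "\<And>i. i \<le> n \<Longrightarrow> c (Suc i) * Vf (Suc (n - i)) w / (fact i * fact (Suc (n - i)))
        = (1 / w) * (c (Suc i) * Vf (n - i) w / (fact i * fact (n - i))) - (z / w) * (c (Suc i) / (fact i * fact (Suc n - i)))"
    proof -
      fix i assume "i \<le> n"
      then have e: "Suc n - i = Suc (n - i)" by simp
      have f: "(fact (Suc (n - i)) :: complex) = of_nat (Suc (n - i)) * fact (n - i)" by simp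
      show "?thesis i" unfolding e using hw hz
        by (simp add: f field_simps del: of_nat_Suc fact_Suc)
    qed
    then show ?thesis by (simp add: sum_subtractf sum_distrib_left)
  qed
  have "(\<Sum>i\<le>Suc n. c (Suc i) * Vf (Suc n - i) w / (fact i * fact (Suc n - i)))
      = c (Suc (Suc n)) * (1 - z) / fact (Suc n) / w + (1 / w) * (1 / w ^ Suc n)
        - (z / w) * (\<Sum>i\<le>n. c (Suc i) / (fact i * fact (Suc n - i)))"
    unfolding split inner Suc.IH using hz by (simp add: field_simps)
  also have "\<dots> = 1 / w ^ Suc (Suc n)" unfolding rec using hw by (simp add: field_simps)
  finally show ?case .
qed



lemma integral_split_pieces:
  fixes f :: "real \<Rightarrow> complex"
  assumes "f integrable_on {0..1}" "M > 0" "m \<le> M"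
  shows "integral {0..real m / real M} f = (\<Sum>l<m. integral {real l / real M..real (Suc l) / real M} f)"
  using assms(3)
proof (induction m)
  case 0 then show ?case by simp
next
  case (Suc m)
  have le: "real (Suc m) / real M \<le> 1" using Suc.prems assms(2) by (simp add: field_simps)
  have int: "f integrable_on {0..real (Suc m) / real M}"
    by (rule integrable_on_subinterval[OF assms(1)]) (use le in auto)
  have "integral {0..real m / real M} f + integral {real m / real M..real (Suc m) / real M} f
      = integral {0..real (Suc m) / real M} f"
    by (rule Henstock_Kurzweil_Integration.integral_combine[OF _ _ int]) (use assms(2) in \<open>auto simp: field_simps\<close>)
  then show ?case using Suc by simp
qed

lemma cos_piece_zero:
  assumes "M > 0"
  shows "((\<lambda>u. cos (real M * pi * u)) has_integral 0) {real l / real M..real (Suc l) / real M}"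
proof -
  have "((\<lambda>u. cos (real M * pi * u)) has_integral
     (sin (real M * pi * (real (Suc l) / real M)) / (real M * pi) - sin (real M * pi * (real l / real M)) / (real M * pi)))
     {real l / real M..real (Suc l) / real M}"
    apply (rule fundamental_theorem_of_calculus[where f = "\<lambda>u. sin (real M * pi * u) / (real M * pi)"])
     apply (use assms in \<open>simp add: field_simps\<close>)
    apply (subst has_real_derivative_iff_has_vector_derivative[symmetric])
    using assms apply (auto intro!: derivative_eq_intros)
    done
  moreover have "real M * pi * (real (Suc l) / real M) = real (Suc l) * pi"
    "real M * pi * (real l / real M) = real l * pi" using assms by (simp_all add: field_simps)
  ultimately show ?thesis by (simp del: of_nat_Suc)
qed

lemma riemann_lebesgue_cos:
  fixes h :: "real \<Rightarrow> complex"
  assumes hc: "continuous_on {0..1} h"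
  shows "(\<lambda>M::nat. integral {0..1} (\<lambda>u. h u * complex_of_real (cos (real M * pi * u)))) \<longlonglongrightarrow> 0"
proof (rule LIMSEQ_I)
  fix r :: real assume r: "r > 0"
  have "uniformly_continuous_on {0..1} h"
    using compact_uniformly_continuous[OF hc] by simp
  then obtain d where d: "d > 0" and dd: "\<And>x x'. x \<in> {0..1} \<Longrightarrow> x' \<in> {0..1} \<Longrightarrow> dist x' x < d \<Longrightarrow> dist (h x') (h x) < r / 2"
    proof -
    have "r / 2 > 0" using r by simp
    then show ?thesis using \<open>uniformly_continuous_on {0..1} h\<close> unfolding uniformly_continuous_on_def
      by (meson that)
  qed
  obtain N :: nat where N: "real N > 1 / d" using reals_Archimedean2 by blast
  show "\<exists>no. \<forall>M\<ge>no. norm (integral {0..1} (\<lambda>u. h u * complex_of_real (cos (real M * pi * u))) - 0) < r"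
  proof (intro exI allI impI)
    fix M assume MN: "M \<ge> Suc N"
    have M0: "M > 0" using MN by simp
    have Md: "1 / real M < d"
    proof -
      have "1 / d < real M" using N MN by simp
      then show ?thesis using d M0 by (simp add: field_simps)
    qed
    define f where "f = (\<lambda>u. h u * complex_of_real (cos (real M * pi * u)))"
    have fc: "continuous_on {0..1} f" unfolding f_def by (intro continuous_intros hc)
    have fi: "f integrable_on {0..1}" by (rule integrable_continuous_interval[OF fc])
    have piece: "norm (integral {real l / real M..real (Suc l) / real M} f) \<le> r / 2 * (1 / real M)"
      if l: "l < M" for l
    proof -
      define a where "a = real l / real M"
      define b where "b = real (Suc l) / real M"
      have ab: "0 \<le> a" "a \<le> b" "b \<le> 1" "b - a = 1 / real M"
        using l M0 by (auto simp: a_def b_def field_simps)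
      have sub: "{a..b} \<subseteq> {0..1}" using ab by auto
      have fcab: "continuous_on {a..b} f" using continuous_on_subset[OF fc sub] .
      have i1: "(f has_integral integral {a..b} f) {a..b}"
        using integrable_continuous_interval[OF fcab] by (simp add: integrable_integral)
      have i2: "((\<lambda>u. h a * complex_of_real (cos (real M * pi * u))) has_integral 0) {a..b}"
        using has_integral_mult_right[OF has_integral_of_real[OF cos_piece_zero[OF M0, of l]], of "h a"]
        by (simp add: a_def b_def)
      have i3: "((\<lambda>u. f u - h a * complex_of_real (cos (real M * pi * u))) has_integral integral {a..b} f) {a..b}"
        using has_integral_diff[OF i1 i2] by simp
      have "norm (integral {a..b} (\<lambda>u. f u - h a * complex_of_real (cos (real M * pi * u)))) \<le> r / 2 * (b - a)"
      proof (rule integral_bound[OF ab(2)])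
        show "continuous_on {a..b} (\<lambda>u. f u - h a * complex_of_real (cos (real M * pi * u)))"
          by (intro continuous_intros fcab)
      next
        fix t assume t: "t \<in> {a..b}"
        have "f t - h a * complex_of_real (cos (real M * pi * t)) = (h t - h a) * complex_of_real (cos (real M * pi * t))"
          by (simp add: f_def algebra_simps)
        also have "norm \<dots> \<le> norm (h t - h a) * 1"
          unfolding norm_mult by (intro mult_left_mono) (auto simp: abs_cos_le_one)
        also have "norm (h t - h a) \<le> r / 2"
        proof -
          have "dist t a < d" using t ab Md by (auto simp: dist_real_def)
          then have "dist (h t) (h a) < r / 2" using dd[of a t] t ab sub by auto
          then show ?thesis by (simp add: dist_norm)
        qed
        finally show "norm (f t - h a * complex_of_real (cos (real M * pi * t))) \<le> r / 2" by simp
      qed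
      then show ?thesis using integral_unique[OF i3] ab(4) by (simp add: a_def b_def)
    qed
    have "integral {0..1} f = (\<Sum>l<M. integral {real l / real M..real (Suc l) / real M} f)"
      using integral_split_pieces[OF fi M0 order_refl] M0 by simp
    have "norm (integral {0..1} f) \<le> (\<Sum>l<M. r / 2 * (1 / real M))"
    proof -
      have "norm (\<Sum>l<M. integral {real l / real M..real (Suc l) / real M} f) \<le> (\<Sum>l<M. norm (integral {real l / real M..real (Suc l) / real M} f))"
        by (rule norm_sum)
      also have "\<dots> \<le> (\<Sum>l<M. r / 2 * (1 / real M))"
        by (rule sum_mono) (use piece in auto)
      finally show ?thesis using \<open>integral {0..1} f = _\<close> by simp
    qed
    also have "\<dots> = r / 2" using M0 by simp
    also have "\<dots> < r" using r by simp
    finally show "norm (integral {0..1} (\<lambda>u. h u * complex_of_real (cos (real M * pi * u))) - 0) < r"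
      by (simp add: f_def)
  qed
qed



lemma quot_limit:
  fixes e :: "real \<Rightarrow> real"
  assumes diff: "\<And>x. e differentiable (at x)" and x: "x = 0 \<or> x = 1" and ex: "e x = 0"
  shows "((\<lambda>u. e u / sin (pi * u)) \<longlongrightarrow> deriv e x / (pi * cos (pi * x))) (at x)"
proof -
  have de: "(e has_field_derivative deriv e x) (at x)"
    using DERIV_deriv_iff_real_differentiable diff by blast
  have ds: "((\<lambda>u. sin (pi * u)) has_field_derivative (pi * cos (pi * x))) (at x)"
    by (auto intro!: derivative_eq_intros simp: mult.commute)
  have sx: "sin (pi * x) = 0" using x by auto
  have cx: "pi * cos (pi * x) \<noteq> 0" using x by auto
  have l: "((\<lambda>y. ((e y - e x) / (y - x)) / ((sin (pi * y) - sin (pi * x)) / (y - x))) \<longlongrightarrow> deriv e x / (pi * cos (pi * x))) (at x)"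
    using tendsto_divide[OF de[unfolded has_field_derivative_iff] ds[unfolded has_field_derivative_iff] cx] .
  show ?thesis
  proof (rule Lim_transform_within[OF l zero_less_one])
    fix y assume "0 < dist y x"
    then have "y - x \<noteq> 0" by simp
    then show "(e y - e x) / (y - x) / ((sin (pi * y) - sin (pi * x)) / (y - x)) = e y / sin (pi * y)"
      using ex sx by (simp add: divide_divide_eq_left divide_divide_eq_right)
  qed
qed

lemma quot_cont:
  fixes e :: "real \<Rightarrow> real"
  assumes diff: "\<And>x. e differentiable (at x)" and e0: "e 0 = 0" and e1: "e 1 = 0"
  shows "continuous_on {0..1} (\<lambda>u. if u = 0 \<or> u = 1 then deriv e u / (pi * cos (pi * u)) else e u / sin (pi * u))"
  unfolding continuous_on_eq_continuous_within
proof
  fix x :: real assume xI: "x \<in> {0..1}"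
  define hh where "hh = (\<lambda>u. if u = 0 \<or> u = 1 then deriv e u / (pi * cos (pi * u)) else e u / sin (pi * u))"
  have lim: "((\<lambda>u. e u / sin (pi * u)) \<longlongrightarrow> hh x) (at x)"
  proof (cases "x = 0 \<or> x = 1")
    case True
    then have "e x = 0" using e0 e1 by auto
    then show ?thesis using quot_limit[OF diff True] True by (simp add: hh_def)
  next
    case False
    then have x01: "0 < x" "x < 1" using xI by auto
    have "sin (pi * x) > 0" by (rule sin_gt_zero) (use x01 in auto)
    moreover have "isCont e x" using diff differentiable_imp_continuous_within by blast
    ultimately have "isCont (\<lambda>u. e u / sin (pi * u)) x" by (intro continuous_intros) auto
    then show ?thesis using False by (simp add: hh_def continuous_at)
  qed
  have d: "0 < (if x = 0 \<or> x = 1 then 1 / 2 else min x (1 - x))" using xI by auto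
  have "(hh \<longlongrightarrow> hh x) (at x within {0..1})"
  proof (rule Lim_transform_within[OF tendsto_mono[OF at_le[OF subset_UNIV] lim] d])
    fix y assume y: "y \<in> {0..1}" "0 < dist y x" "dist y x < (if x = 0 \<or> x = 1 then 1 / 2 else min x (1 - x))"
    then have "\<not> (y = 0 \<or> y = 1)" using xI by (auto simp: dist_real_def split: if_splits)
    then show "e y / sin (pi * y) = hh y" by (simp add: hh_def)
  qed
  then show "continuous (at x within {0..1}) hh" by (simp add: continuous_within)
qed

lemma cot_dirichlet:
  fixes u :: real
  assumes "sin (pi * u) \<noteq> 0"
  shows "cot (pi * u) = (\<Sum>n=1..N. 2 * sin (2 * pi * real n * u)) + cos ((2 * real N + 1) * pi * u) / sin (pi * u)"
proof (induction N)
  case 0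
  then show ?case by (simp add: cot_def)
next
  case (Suc N)
  define A where "A = 2 * pi * real (Suc N) * u"
  define x where "x = pi * u"
  have a1: "(2 * real N + 1) * pi * u = A - x" by (simp add: A_def x_def algebra_simps)
  have a2: "(2 * real (Suc N) + 1) * pi * u = A + x" by (simp add: A_def x_def algebra_simps)
  have "cos ((2 * real N + 1) * pi * u) / sin (pi * u) = 2 * sin A + cos ((2 * real (Suc N) + 1) * pi * u) / sin (pi * u)"
    unfolding a1 a2 using assms unfolding x_def[symmetric]
    by (simp add: cos_diff cos_add field_simps)
  then show ?case using Suc by (simp add: A_def)
qed




lemma fourier_G:
  fixes c :: "nat \<Rightarrow> complex" and b :: real and k :: nat and m :: int
  defines "zc \<equiv> complex_of_real (exp (- 2 * pi * b))"
  assumes c1: "c 1 * (1 - zc) = 1"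
    and crec: "\<And>n. n \<ge> 1 \<Longrightarrow> c (Suc n) * (1 - zc) = zc * (\<Sum>i<n. of_nat (n choose i) * c (Suc i))"
    and k: "k \<ge> 1" and m: "m \<noteq> 0"
  shows "((\<lambda>u. (\<Sum>j = 1..k. c j * complex_of_real (u ^ (k - j) * exp (- 2 * pi * b * u) - exp (- 2 * pi * b))
          / complex_of_real (fact (j - 1) * fact (k - j))) * exp (\<i> * complex_of_real (2 * pi * of_int m * u)))
     has_integral 1 / (complex_of_real (2 * pi) * (complex_of_real b - \<i> * of_int m)) ^ k) {0..1}"
proof -
  define w where "w = complex_of_real (2 * pi) * (complex_of_real b - \<i> * of_int m)"
  define w' where "w' = - \<i> * complex_of_real (2 * pi * of_int m)"
  have wnz: "w \<noteq> 0" using m by (auto simp: w_def complex_eq_iff)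
  have w'nz: "w' \<noteq> 0" using m by (auto simp: w'_def)
  have e1: "exp (\<i> * complex_of_real (2 * pi * of_int m)) = 1"
    using exp_2pi_1_int[of m] by (simp add: mult_ac)
  have ew: "exp (- w) = zc"
  proof -
    have "- w = complex_of_real (- 2 * pi * b) + \<i> * complex_of_real (2 * pi * of_int m)"
      by (simp add: w_def algebra_simps)
    then have "exp (- w) = exp (complex_of_real (- 2 * pi * b)) * exp (\<i> * complex_of_real (2 * pi * of_int m))"
      by (simp only: exp_add)
    then show ?thesis by (simp only: e1 mult_1_right exp_of_real zc_def)
  qed
  have ew': "exp (- w') = 1" using e1 by (simp add: w'_def)
  have V0: "Vf 0 w' = 0" using ew' by simp
  define E where "E = (\<lambda>u::real. exp (\<i> * complex_of_real (2 * pi * of_int m * u)))"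
  have termeq: "c j * complex_of_real (u ^ (k - j) * exp (- 2 * pi * b * u) - exp (- 2 * pi * b)) / complex_of_real (fact (j - 1) * fact (k - j)) * exp (\<i> * complex_of_real (2 * pi * of_int m * u))
      = (c j / complex_of_real (fact (j - 1) * fact (k - j))) *
        ((complex_of_real u) ^ (k - j) * exp (- w * complex_of_real u) - zc * ((complex_of_real u) ^ 0 * exp (- w' * complex_of_real u)))"
    for j u
  proof -
    have "complex_of_real (exp (- 2 * pi * b * u)) * E u = exp (- w * complex_of_real u)"
    proof -
      have "complex_of_real (exp (- 2 * pi * b * u)) * E u = exp (complex_of_real (- 2 * pi * b * u) + \<i> * complex_of_real (2 * pi * of_int m * u))"
        by (simp only: E_def exp_add exp_of_real)
      also have "complex_of_real (- 2 * pi * b * u) + \<i> * complex_of_real (2 * pi * of_int m * u) = - w * complex_of_real u"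
        by (simp add: w_def algebra_simps)
      finally show ?thesis .
    qed
    moreover have "E u = exp (- w' * complex_of_real u)" by (simp add: E_def w'_def mult_ac)
    ultimately show ?thesis unfolding zc_def E_def by (simp add: field_simps)
  qed
  have feq: "(\<lambda>u. (\<Sum>j = 1..k. c j * complex_of_real (u ^ (k - j) * exp (- 2 * pi * b * u) - exp (- 2 * pi * b))
          / complex_of_real (fact (j - 1) * fact (k - j))) * exp (\<i> * complex_of_real (2 * pi * of_int m * u)))
     = (\<lambda>u. \<Sum>j = 1..k. (c j / complex_of_real (fact (j - 1) * fact (k - j))) *
        ((complex_of_real u) ^ (k - j) * exp (- w * complex_of_real u) - zc * ((complex_of_real u) ^ 0 * exp (- w' * complex_of_real u))))"
    by (rule ext) (simp only: sum_distrib_right termeq)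
  have I: "((\<lambda>u. \<Sum>j = 1..k. (c j / complex_of_real (fact (j - 1) * fact (k - j))) *
        ((complex_of_real u) ^ (k - j) * exp (- w * complex_of_real u) - zc * ((complex_of_real u) ^ 0 * exp (- w' * complex_of_real u))))
      has_integral (\<Sum>j = 1..k. (c j / complex_of_real (fact (j - 1) * fact (k - j))) * (Vf (k - j) w - zc * Vf 0 w'))) {0..1}"
    by (intro has_integral_sum finite_atLeastAtMost has_integral_mult_right has_integral_diff
          Vf_integral wnz w'nz)
  have eq: "(\<Sum>j = 1..k. (c j / complex_of_real (fact (j - 1) * fact (k - j))) * (Vf (k - j) w - zc * Vf 0 w'))
      = 1 / w ^ k"
  proof -
    obtain n where kn: "k = Suc n" using k by (cases k) auto
    have "(\<Sum>j = 1..k. (c j / complex_of_real (fact (j - 1) * fact (k - j))) * (Vf (k - j) w - zc * Vf 0 w'))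
        = (\<Sum>i\<le>n. c (Suc i) * Vf (n - i) w / (fact i * fact (n - i)))"
    proof -
      have "(\<Sum>j = 1..Suc n. (c j / complex_of_real (fact (j - 1) * fact (Suc n - j))) * (Vf (Suc n - j) w - zc * Vf 0 w'))
          = (\<Sum>i\<le>n. (c (Suc i) / complex_of_real (fact (Suc i - 1) * fact (Suc n - Suc i))) * (Vf (Suc n - Suc i) w - zc * Vf 0 w'))"
        by (simp only: One_nat_def sum.shift_bounds_cl_Suc_ivl atLeast0AtMost)
      also have "\<dots> = (\<Sum>i\<le>n. c (Suc i) * Vf (n - i) w / (fact i * fact (n - i)))"
        by (rule sum.cong[OF refl]) (simp add: ew')
      finally show ?thesis unfolding kn .
    qed
    also have "\<dots> = 1 / w ^ Suc n"
      by (rule T_identity[OF c1 crec wnz ew])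
    finally show ?thesis by (simp add: kn)
  qed
  show ?thesis
    unfolding feq w_def[symmetric] using I unfolding eq .
qed



theorem mainTheorem2:
  fixes k :: nat and b :: real
  assumes "k \<ge> 2" and "b \<noteq> 0"
  shows "complex_of_real (Im (\<Sum>j. 1 / (\<i> * of_nat j + complex_of_real b) ^ k)) =
    - complex_of_real ((2 * pi) ^ k / 2) *
      integral {0..1::real} (\<lambda>u. (\<Sum>j = 1..k.
          c_coef j b * complex_of_real (u ^ (k - j) * exp (- 2 * pi * b * u) - exp (- 2 * pi * b))
          / complex_of_real (fact (j - 1) * fact (k - j))) * complex_of_real (cot (pi * u)))"
proof -
  have k1: "k \<ge> 1" using assms(1) by simp
  define zc where "zc = complex_of_real (exp (- 2 * pi * b))"
  have z1: "zc \<noteq> 1"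
  proof
    assume "zc = 1"
    then have "exp (- 2 * pi * b) = 1" by (simp add: zc_def)
    then have "- 2 * pi * b = 0" by simp
    then show False using assms(2) by simp
  qed
  have c1: "c_coef 1 b * (1 - zc) = 1"
    using z1 unfolding c_coef_def zc_def[symmetric] by (simp add: field_simps)
  have crec: "c_coef (Suc n) b * (1 - zc) = zc * (\<Sum>i<n. of_nat (n choose i) * c_coef (Suc i) b)" if n1: "n \<ge> 1" for n
  proof -
    have "(\<Sum>i<n. of_nat (n choose i) * c_coef (Suc i) b)
        = (\<Sum>i<n. (if i = 0 then 1 else 0)) + (\<Sum>i<n. of_nat (n choose i) * polylog_nonpos i zc)"
      by (subst sum.distrib[symmetric], rule sum.cong) (unfold c_coef_def zc_def[symmetric], auto simp: algebra_simps)
    also have "(\<Sum>i<n. (if i = 0 then 1 else 0 :: complex)) = 1" using n1 by simp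
    finally have "(\<Sum>i<n. of_nat (n choose i) * c_coef (Suc i) b) = 1 + (\<Sum>i<n. of_nat (n choose i) * polylog_nonpos i zc)" .
    moreover have "c_coef (Suc n) b = polylog_nonpos n zc" using n1 by (simp add: c_coef_def zc_def)
    ultimately show ?thesis using L_rec[OF z1, of n] by simp
  qed
  define G where "G = (\<lambda>u::real. \<Sum>j = 1..k.
          c_coef j b * complex_of_real (u ^ (k - j) * exp (- 2 * pi * b * u) - exp (- 2 * pi * b))
          / complex_of_real (fact (j - 1) * fact (k - j)))"
  have FG: "((\<lambda>u. G u * exp (\<i> * complex_of_real (2 * pi * of_int m * u)))
     has_integral 1 / (complex_of_real (2 * pi) * (complex_of_real b - \<i> * of_int m)) ^ k) {0..1}"
    if "m \<noteq> 0" for m :: int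
    unfolding G_def using fourier_G[of "\<lambda>j. c_coef j b" b k m, OF c1[unfolded zc_def] crec[unfolded zc_def] k1 that] by simp
  define Xs where "Xs = (\<lambda>nn::nat. (1 / (complex_of_real (2 * pi) * (complex_of_real b - \<i> * of_nat nn)) ^ k
      - 1 / (complex_of_real (2 * pi) * (complex_of_real b + \<i> * of_nat nn)) ^ k) / \<i>)"
  have FS: "((\<lambda>u. G u * complex_of_real (2 * sin (2 * pi * real nn * u))) has_integral Xs nn) {0..1}"
    if "nn \<ge> 1" for nn :: nat
  proof -
    have a: "((\<lambda>u. G u * exp (\<i> * complex_of_real (2 * pi * real nn * u)))
     has_integral 1 / (complex_of_real (2 * pi) * (complex_of_real b - \<i> * of_nat nn)) ^ k) {0..1}"
      using FG[of "int nn"] that by simp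
    have b: "((\<lambda>u. G u * exp (- (\<i> * complex_of_real (2 * pi * real nn * u))))
     has_integral 1 / (complex_of_real (2 * pi) * (complex_of_real b + \<i> * of_nat nn)) ^ k) {0..1}"
      using FG[of "- int nn"] that by simp
    have "((\<lambda>u. (G u * exp (\<i> * complex_of_real (2 * pi * real nn * u)) - G u * exp (- (\<i> * complex_of_real (2 * pi * real nn * u)))) / \<i>)
       has_integral Xs nn) {0..1}"
      unfolding Xs_def by (intro has_integral_divide has_integral_diff a b)
    moreover have "(G u * exp (\<i> * complex_of_real (2 * pi * real nn * u)) - G u * exp (- (\<i> * complex_of_real (2 * pi * real nn * u)))) / \<i>
        = G u * complex_of_real (2 * sin (2 * pi * real nn * u))" for u
    proof -
      have "complex_of_real (2 * sin (2 * pi * real nn * u)) = 2 * sin (complex_of_real (2 * pi * real nn * u))"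
        by (subst of_real_mult) (simp only: of_real_numeral sin_of_real)
      also have "\<dots> = (exp (\<i> * complex_of_real (2 * pi * real nn * u)) - exp (- (\<i> * complex_of_real (2 * pi * real nn * u)))) / \<i>"
        by (simp add: sin_exp_eq field_simps)
      finally have eq: "complex_of_real (2 * sin (2 * pi * real nn * u)) = (exp (\<i> * complex_of_real (2 * pi * real nn * u)) - exp (- (\<i> * complex_of_real (2 * pi * real nn * u)))) / \<i>" .
      show ?thesis by (simp only: eq right_diff_distrib times_divide_eq_right)
    qed
    ultimately show ?thesis by simp
  qed
  define g where "g = (\<lambda>j u. (u ^ (k - j) * exp (- 2 * pi * b * u) - exp (- 2 * pi * b)) / (fact (j - 1) * fact (k - j)))"
  have Gg: "G u = (\<Sum>j = 1..k. c_coef j b * complex_of_real (g j u))" for u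
    unfolding G_def g_def by (simp add: of_real_divide)
  have G0: "G 0 = 0"
  proof -
    obtain n where kn: "k = Suc n" and n1: "n \<ge> 1" using assms(1) by (cases k) auto
    have "G 0 = (\<Sum>i\<le>n. c_coef (Suc i) b * complex_of_real ((0 ^ (n - i) - exp (- 2 * pi * b)) / (fact i * fact (n - i))))"
      unfolding Gg g_def kn by (simp only: One_nat_def sum.shift_bounds_cl_Suc_ivl atLeast0AtMost) simp
    also have "\<dots> = (\<Sum>i\<le>n. c_coef (Suc i) b * (if i = n then 1 else 0) / (fact i * fact (n - i))
        - zc * (c_coef (Suc i) b / (fact i * fact (n - i))))"
      by (rule sum.cong[OF refl]) (auto simp: zc_def of_real_divide field_simps power_0_left)
    also have "\<dots> = (\<Sum>i\<le>n. c_coef (Suc i) b * (if i = n then 1 else 0) / (fact i * fact (n - i)))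
        - zc * (\<Sum>i\<le>n. c_coef (Suc i) b / (fact i * fact (n - i)))"
      by (simp add: sum_subtractf sum_distrib_left)
    also have "(\<Sum>i\<le>n. c_coef (Suc i) b * (if i = n then 1 else 0) / (fact i * fact (n - i))) = c_coef (Suc n) b / fact n"
    proof -
      have "(\<Sum>i\<le>n. c_coef (Suc i) b * (if i = n then 1 else 0) / (fact i * fact (n - i)))
          = (\<Sum>i\<le>n. if i = n then c_coef (Suc n) b / fact n else 0)"
        by (rule sum.cong[OF refl]) auto
      then show ?thesis by simp
    qed
    also have "(\<Sum>i\<le>n. c_coef (Suc i) b / (fact i * fact (n - i))) = c_coef (Suc n) b / fact n + (\<Sum>i<n. c_coef (Suc i) b / (fact i * fact (n - i)))"
      by (simp add: lessThan_Suc_atMost[symmetric])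
    also have "(\<Sum>i<n. c_coef (Suc i) b / (fact i * fact (n - i))) = (\<Sum>i<n. of_nat (n choose i) * c_coef (Suc i) b) / fact n"
    proof -
      have "(\<Sum>i<n. of_nat (n choose i) * c_coef (Suc i) b) / fact n = (\<Sum>i<n. of_nat (n choose i) * c_coef (Suc i) b / fact n)"
        by (simp add: sum_divide_distrib)
      also have "\<dots> = (\<Sum>i<n. c_coef (Suc i) b / (fact i * fact (n - i)))"
      proof (rule sum.cong[OF refl])
        fix i assume "i \<in> {..<n}"
        then have "(of_nat (n choose i) :: complex) = fact n / (fact i * fact (n - i))"
          by (simp add: binomial_fact)
        then show "of_nat (n choose i) * c_coef (Suc i) b / fact n = c_coef (Suc i) b / (fact i * fact (n - i))"
          by (simp add: field_simps)
      qed
      finally show ?thesis by simp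
    qed
    finally have G0e: "G 0 = c_coef (Suc n) b / fact n - zc * (c_coef (Suc n) b / fact n + (\<Sum>i<n. of_nat (n choose i) * c_coef (Suc i) b) / fact n)" .
    have "G 0 = (c_coef (Suc n) b * (1 - zc) - zc * (\<Sum>i<n. of_nat (n choose i) * c_coef (Suc i) b)) / fact n"
      unfolding G0e by (simp add: diff_divide_distrib add_divide_distrib algebra_simps)
    then show ?thesis using crec[OF n1] by simp
  qed
  define e where "e = (\<lambda>j u. g j u - g j 0 * (1 - u))"
  have ediff: "e j differentiable (at x)" for j x
    unfolding e_def g_def real_differentiable_def by (rule exI) (auto intro!: derivative_eq_intros)
  have e0: "e j 0 = 0" for j by (simp add: e_def)
  have e1: "e j 1 = 0" for j by (simp add: e_def g_def)
  define hh where "hh = (\<lambda>j u. if u = 0 \<or> u = 1 then deriv (e j) u / (pi * cos (pi * u)) else e j u / sin (pi * u))"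
  have hhc: "continuous_on {0..1} (hh j)" for j
    unfolding hh_def by (rule quot_cont[OF ediff e0 e1])
  define Ht where "Ht = (\<lambda>u. \<Sum>j = 1..k. c_coef j b * complex_of_real (hh j u))"
  have Htc: "continuous_on {0..1} Ht"
    unfolding Ht_def by (intro continuous_intros hhc)
  have HtG: "Ht u * complex_of_real (sin (pi * u)) = G u" if u: "u \<in> {0<..<1}" for u
  proof -
    have s: "sin (pi * u) > 0" by (rule sin_gt_zero) (use u in auto)
    have "Ht u * complex_of_real (sin (pi * u)) = (\<Sum>j = 1..k. c_coef j b * complex_of_real (e j u))"
      unfolding Ht_def sum_distrib_right
    proof (rule sum.cong[OF refl])
      fix j
      have "hh j u = e j u / sin (pi * u)" using u by (simp add: hh_def)
      then show "c_coef j b * complex_of_real (hh j u) * complex_of_real (sin (pi * u)) = c_coef j b * complex_of_real (e j u)"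
        using s by (simp add: of_real_divide)
    qed
    also have "\<dots> = (\<Sum>j = 1..k. c_coef j b * complex_of_real (g j u)) - complex_of_real (1 - u) * (\<Sum>j = 1..k. c_coef j b * complex_of_real (g j 0))"
      by (simp add: e_def sum_subtractf sum.distrib sum_distrib_left algebra_simps)
    also have "\<dots> = G u" using G0 by (simp add: Gg)
    finally show ?thesis .
  qed
  have Dir: "G u * complex_of_real (cot (pi * u)) = (\<Sum>nn = 1..N. G u * complex_of_real (2 * sin (2 * pi * real nn * u)))
      + Ht u * complex_of_real (cos (real (2 * N + 1) * pi * u))" if u: "u \<in> {0<..<1}" for u N
  proof -
    have s: "sin (pi * u) > 0" by (rule sin_gt_zero) (use u in auto)
    have "cot (pi * u) = (\<Sum>n=1..N. 2 * sin (2 * pi * real n * u)) + cos ((2 * real N + 1) * pi * u) / sin (pi * u)"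
      by (rule cot_dirichlet) (use s in auto)
    then have "complex_of_real (cot (pi * u)) = (\<Sum>n=1..N. complex_of_real (2 * sin (2 * pi * real n * u)))
        + complex_of_real (cos (real (2 * N + 1) * pi * u)) / complex_of_real (sin (pi * u))"
      by (simp add: of_real_divide add.commute)
    then show ?thesis unfolding HtG[OF u, symmetric] using s
      by (simp add: sum_distrib_left field_simps)
  qed
  define R where "R = (\<lambda>N::nat. integral {0..1} (\<lambda>u. Ht u * complex_of_real (cos (real (2 * N + 1) * pi * u))))"
  define J where "J = integral {0..1} (\<lambda>u. G u * complex_of_real (cot (pi * u)))"
  have JN: "J = (\<Sum>nn = 1..N. Xs nn) + R N" for N
  proof -
    have ci: "continuous_on {0..1} (\<lambda>u. Ht u * complex_of_real (cos (real (2 * N + 1) * pi * u)))"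
      by (intro continuous_intros Htc)
    have I0: "((\<lambda>u. (\<Sum>nn = 1..N. G u * complex_of_real (2 * sin (2 * pi * real nn * u)))
      + Ht u * complex_of_real (cos (real (2 * N + 1) * pi * u))) has_integral (\<Sum>nn = 1..N. Xs nn) + R N) {0..1}"
      unfolding R_def
      by (intro has_integral_add has_integral_sum finite_atLeastAtMost FS integrable_integral
          integrable_continuous_interval ci) auto
    have "((\<lambda>u. G u * complex_of_real (cot (pi * u))) has_integral (\<Sum>nn = 1..N. Xs nn) + R N) {0..1}"
      by (rule has_integral_spike_finite[where S="{0,1}", OF _ _ I0]) (simp, rule Dir, auto)
    then show ?thesis unfolding J_def by (rule integral_unique)
  qed
  have Rlim: "R \<longlonglongrightarrow> 0"
  proof -
    have sm: "strict_mono (\<lambda>N::nat. 2 * N + 1)" by (rule strict_monoI) simp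
    show ?thesis using LIMSEQ_subseq_LIMSEQ[OF riemann_lebesgue_cos[OF Htc] sm]
      by (simp add: R_def o_def)
  qed
  have Slim: "(\<lambda>N. \<Sum>nn = 1..N. Xs nn) \<longlonglongrightarrow> J"
  proof -
    have "(\<lambda>N. J - R N) \<longlonglongrightarrow> J - 0" by (intro tendsto_diff tendsto_const Rlim)
    moreover have "J - R N = (\<Sum>nn = 1..N. Xs nn)" for N using JN[of N] by simp
    ultimately show ?thesis by simp
  qed
  define f where "f = (\<lambda>j::nat. 1 / (\<i> * of_nat j + complex_of_real b) ^ k)"
  have sf: "summable f"
  proof (rule summable_comparison_test'[OF inverse_power_summable[of 2, OF order_refl]])
    fix j :: nat assume j: "j \<ge> 1"
    have nj: "real j \<le> norm (\<i> * of_nat j + complex_of_real b)"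
      using abs_Im_le_cmod[of "\<i> * of_nat j + complex_of_real b"] by simp
    have "real j ^ 2 \<le> real j ^ k" using j assms(1) by (intro power_increasing) auto
    also have "\<dots> \<le> norm (\<i> * of_nat j + complex_of_real b) ^ k" using nj by (intro power_mono) auto
    finally have le: "real j ^ 2 \<le> norm (\<i> * of_nat j + complex_of_real b) ^ k" .
    have "norm (f j) = 1 / norm (\<i> * of_nat j + complex_of_real b) ^ k"
      by (simp add: f_def norm_divide norm_power)
    also have "\<dots> \<le> 1 / real j ^ 2"
      by (rule divide_left_mono[OF le]) (use j le in \<open>auto intro!: mult_pos_pos less_le_trans[OF _ le]\<close>)
    finally show "norm (f j) \<le> inverse (of_nat j ^ 2 :: real)" by (simp add: divide_inverse)
  qed
  have L1: "(\<lambda>N. complex_of_real (Im (\<Sum>i\<le>N. f i))) \<longlonglongrightarrow> complex_of_real (Im (suminf f))"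
    by (intro tendsto_of_real tendsto_Im summable_LIMSEQ'[OF sf])
  have trm: "complex_of_real (Im (f nn)) = - complex_of_real ((2 * pi) ^ k / 2) * Xs nn" if nn: "nn \<ge> 1" for nn
  proof -
    define p where "p = complex_of_real b + \<i> * of_nat nn"
    define q where "q = complex_of_real b - \<i> * of_nat nn"
    define P where "P = complex_of_real (2 * pi)"
    have pnz: "p \<noteq> 0" using nn by (auto simp: p_def complex_eq_iff)
    have qnz: "q \<noteq> 0" using nn by (auto simp: q_def complex_eq_iff)
    have Pnz: "P \<noteq> 0" by (simp add: P_def)
    have fp: "f nn = 1 / p ^ k" by (simp add: f_def p_def add.commute)
    have cf: "cnj (f nn) = 1 / q ^ k" by (simp add: fp p_def q_def)
    have im: "complex_of_real (Im (f nn)) = (f nn - cnj (f nn)) / (2 * \<i>)"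
      by (simp add: complex_diff_cnj field_simps)
    have xs: "Xs nn = (1 / (P ^ k * q ^ k) - 1 / (P ^ k * p ^ k)) / \<i>"
      by (simp add: Xs_def P_def p_def q_def power_mult_distrib)
    have P2: "complex_of_real ((2 * pi) ^ k / 2) = P ^ k / 2" by (simp add: P_def)
    have im2: "complex_of_real (Im (f nn)) = (1 / p ^ k - 1 / q ^ k) / (2 * \<i>)"
      by (subst im, subst cf, subst fp, rule refl)
    show ?thesis unfolding im2 xs P2 using pnz qnz Pnz
      by (simp add: field_simps)
  qed
  have eqN: "complex_of_real (Im (\<Sum>i\<le>N. f i)) = - complex_of_real ((2 * pi) ^ k / 2) * (\<Sum>nn = 1..N. Xs nn)" for N
  proof -
    have f0: "Im (f 0) = 0"
      by (simp add: f_def of_real_power[symmetric] of_real_divide[symmetric] del: of_real_power of_real_divide)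
    have "(\<Sum>i\<le>N. f i) = f 0 + (\<Sum>i = 1..N. f i)"
      by (simp add: atMost_atLeast0 sum.atLeast_Suc_atMost)
    then have "complex_of_real (Im (\<Sum>i\<le>N. f i)) = (\<Sum>i = 1..N. complex_of_real (Im (f i)))"
      using f0 by simp
    also have "\<dots> = (\<Sum>i = 1..N. - complex_of_real ((2 * pi) ^ k / 2) * Xs i)"
      by (rule sum.cong[OF refl]) (rule trm, auto)
    finally show ?thesis by (simp add: sum_distrib_left)
  qed
  have L2: "(\<lambda>N. complex_of_real (Im (\<Sum>i\<le>N. f i))) \<longlonglongrightarrow> - complex_of_real ((2 * pi) ^ k / 2) * J"
    unfolding eqN by (intro tendsto_mult tendsto_const Slim)
  have "complex_of_real (Im (suminf f)) = - complex_of_real ((2 * pi) ^ k / 2) * J"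
    by (rule LIMSEQ_unique[OF L1 L2])
  then show ?thesis unfolding f_def J_def G_def .
qed

end
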